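(* Let $X=(\mathbb{R}^n,\|\cdot\|)$ be a real Banach space with an absolute norm and let $\tilde X=(\mathbb{C}^n,\|\cdot\|_{\mathbb{C}})$ be its complexification, $\|(z_1,\dots,z_n)\|_{\mathbb{C}}=\|(|z_1|,\dots,|z_n|)\|$. Then for $x\in X$, $x$ is an extreme point of $B_X$ if and only if $x$ is an extreme point of $B_{\tilde X}$. Moreover, $X$ is a CL-space if and only if $\tilde X$ is a CL-space.
   Context: A norm on $\mathbb{R}^n$ or $\mathbb{C}^n$ is absolute if $\|(a_1,\dots,a_n)\|=\|(|a_1|,\dots,|a_n|)\|$ for all scalars $a_j$ and $\|e_1\|=\dots=\|e_n\|=1$ for the canonical basis $\{e_j\}$. A point $x\in B_Z$ is an extreme point if $y+z=2x$ with $y,z\in B_Z$ implies $x=y=z$. A real or complex Banach space is a CL-space if its unit ball is the absolutely convex hull of every maximal convex subset of its unit sphere; for finite-dimensional spaces this is equivalent to $|x^*(x)|=1$ for every extreme point $x^*$ of $B_{X^*}$ and every extreme point $x$ of $B_X$. *)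

theory Defs
  imports "HOL-Analysis.Analysis"
begin

definition absolute_norm :: "(real ^ 'n \<Rightarrow> real) \<Rightarrow> bool" where
  "absolute_norm N \<longleftrightarrow>
     (\<forall>x. 0 \<le> N x) \<and> (\<forall>x. N x = 0 \<longleftrightarrow> x = 0) \<and>
     (\<forall>c x. N (c *s x) = \<bar>c\<bar> * N x) \<and>
     (\<forall>x y. N (x + y) \<le> N x + N y) \<and>
     (\<forall>x. N x = N (\<chi> i. \<bar>x $ i\<bar>)) \<and>
     (\<forall>i. N (axis i 1) = 1)"

definition cplx_norm :: "(real ^ 'n \<Rightarrow> real) \<Rightarrow> complex ^ 'n \<Rightarrow> real" where
  "cplx_norm N z = N (\<chi> i. cmod (z $ i))"

definition cplx_of :: "real ^ 'n \<Rightarrow> complex ^ 'n" where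
  "cplx_of x = (\<chi> i. complex_of_real (x $ i))"

definition ext_pt :: "'a::real_vector set \<Rightarrow> 'a \<Rightarrow> bool" where
  "ext_pt B x \<longleftrightarrow> x \<in> B \<and> (\<forall>y\<in>B. \<forall>z\<in>B. y + z = 2 *\<^sub>R x \<longrightarrow> x = y \<and> x = z)"

definition max_convex_subset :: "'a::real_vector set \<Rightarrow> 'a set \<Rightarrow> bool" where
  "max_convex_subset S F \<longleftrightarrow> convex F \<and> F \<subseteq> S \<and>
     (\<forall>G. convex G \<and> G \<subseteq> S \<and> F \<subseteq> G \<longrightarrow> G = F)"

definition real_aco :: "(real ^ 'n) set \<Rightarrow> (real ^ 'n) set" where
  "real_aco F = convex hull {c *s x | c x. \<bar>c\<bar> \<le> 1 \<and> x \<in> F}"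

definition complex_aco :: "(complex ^ 'n) set \<Rightarrow> (complex ^ 'n) set" where
  "complex_aco F = convex hull {c *s x | c x. cmod c \<le> 1 \<and> x \<in> F}"

definition real_CL :: "(real ^ 'n \<Rightarrow> real) \<Rightarrow> bool" where
  "real_CL N \<longleftrightarrow> (\<forall>F. max_convex_subset {x. N x = 1} F \<longrightarrow> {x. N x \<le> 1} = real_aco F)"

definition complex_CL :: "(complex ^ 'n \<Rightarrow> real) \<Rightarrow> bool" where
  "complex_CL N \<longleftrightarrow> (\<forall>F. max_convex_subset {x. N x = 1} F \<longrightarrow> {x. N x \<le> 1} = complex_aco F)"

end

theory Submission
  imports Defs
begin


lemma ext_pt_iff_extreme:
  assumes "convex S"
  shows "ext_pt S x \<longleftrightarrow> x extreme_point_of S"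
proof
  assume e: "ext_pt S x"
  show "x extreme_point_of S"
    unfolding extreme_point_of_def
  proof (intro conjI ballI)
    show "x \<in> S" using e by (simp add: ext_pt_def)
    fix a b assume ab: "a \<in> S" "b \<in> S"
    show "x \<notin> open_segment a b"
    proof
      assume "x \<in> open_segment a b"
      then obtain u where u: "a \<noteq> b" "0 < u" "u < 1" "x = (1 - u) *\<^sub>R a + u *\<^sub>R b"
        by (auto simp: in_segment)
      define d where "d = min u (1 - u)"
      have d: "0 < d" "d \<le> u" "d \<le> 1 - u" using u by (auto simp: d_def)
      define y where "y = x - d *\<^sub>R (b - a)"
      define z where "z = x + d *\<^sub>R (b - a)"
      have y: "y = (1 - (u - d)) *\<^sub>R a + (u - d) *\<^sub>R b"
        by (simp add: y_def u(4) algebra_simps)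
      have z: "z = (1 - (u + d)) *\<^sub>R a + (u + d) *\<^sub>R b"
        by (simp add: z_def u(4) algebra_simps)
      have "y \<in> S" unfolding y using d u ab assms
        by (intro convexD) auto
      moreover have "z \<in> S" unfolding z using d u ab assms
        by (intro convexD) auto
      moreover have "y + z = 2 *\<^sub>R x" by (simp add: y_def z_def algebra_simps scaleR_2)
      ultimately have "x = y" using e ab by (auto simp: ext_pt_def)
      hence "d *\<^sub>R (b - a) = 0" by (simp add: y_def)
      thus False using d u by simp
    qed
  qed
next
  assume e: "x extreme_point_of S"
  have "x \<in> S" using e by (simp add: extreme_point_of_def)
  moreover have "x = y \<and> x = z" if yz: "y \<in> S" "z \<in> S" "y + z = 2 *\<^sub>R x" for y z
  proof -
    have m: "x = midpoint y z" by (simp add: midpoint_def yz(3))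
    have "y = z"
    proof (rule ccontr)
      assume "y \<noteq> z"
      hence "x \<in> open_segment y z" using m by simp
      thus False using e yz by (auto simp: extreme_point_of_def)
    qed
    thus "x = y \<and> x = z" using m by simp
  qed
  ultimately show "ext_pt S x" by (auto simp: ext_pt_def)
qed

definition snorm :: "('a::real_vector \<Rightarrow> real) \<Rightarrow> bool" where
  "snorm p \<longleftrightarrow> (\<forall>c v. p (c *\<^sub>R v) = \<bar>c\<bar> * p v) \<and> (\<forall>v w. p (v + w) \<le> p v + p w)
     \<and> (\<forall>v. p v = 0 \<longrightarrow> v = 0)"

lemma snorm_hom: "snorm p \<Longrightarrow> p (c *\<^sub>R v) = \<bar>c\<bar> * p v"
  by (simp add: snorm_def)
lemma snorm_tri: "snorm p \<Longrightarrow> p (v + w) \<le> p v + p w"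
  by (simp add: snorm_def)
lemma snorm_zero: "snorm p \<Longrightarrow> p v = 0 \<Longrightarrow> v = 0"
  by (simp add: snorm_def)
lemma snorm_0: "snorm p \<Longrightarrow> p 0 = 0"
  using snorm_hom[of p 0 0] by simp
lemma snorm_minus: "snorm p \<Longrightarrow> p (- v) = p v"
  using snorm_hom[of p "-1" v] by simp
lemma snorm_nonneg: "snorm p \<Longrightarrow> 0 \<le> p v"
  using snorm_tri[of p v "-v"] snorm_minus[of p v] snorm_0[of p] by simp

lemma snorm_convex_comb:
  assumes "snorm p" "0 \<le> t" "t \<le> 1"
  shows "p ((1 - t) *\<^sub>R v + t *\<^sub>R w) \<le> (1 - t) * p v + t * p w"
  using snorm_tri[OF assms(1), of "(1 - t) *\<^sub>R v" "t *\<^sub>R w"] snorm_hom[OF assms(1)] assms(2,3)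
  by simp

lemma snorm_convex_lt:
  assumes "snorm p" shows "convex {v. p v < 1}"
proof (rule convexI)
  fix x y :: 'a and u v :: real assume xy: "x \<in> {v. p v < 1}" "y \<in> {v. p v < 1}" "0 \<le> u" "0 \<le> v" "u + v = 1"
  have "p (u *\<^sub>R x + v *\<^sub>R y) \<le> u * p x + v * p y"
    using snorm_tri[OF assms, of "u *\<^sub>R x" "v *\<^sub>R y"] snorm_hom[OF assms] xy by simp
  also have "\<dots> < 1"
  proof -
    have "u * p x \<le> u * 1" "v * p y \<le> v * 1" using xy by (auto intro!: mult_left_le)
    moreover have "u * p x < u \<or> v * p y < v" using xy by (cases "u = 0") auto
    ultimately show ?thesis using xy by linarith
  qed
  finally show "u *\<^sub>R x + v *\<^sub>R y \<in> {v. p v < 1}" by simp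
qed

lemma snorm_convex_face:
  assumes "snorm p" shows "convex {v::'a::real_inner. p v \<le> 1 \<and> inner u v = 1}"
proof (rule convexI)
  fix x y :: 'a and a b :: real assume xy: "x \<in> {v. p v \<le> 1 \<and> inner u v = 1}" "y \<in> {v. p v \<le> 1 \<and> inner u v = 1}" "0 \<le> a" "0 \<le> b" "a + b = 1"
  have "p (a *\<^sub>R x + b *\<^sub>R y) \<le> a * p x + b * p y"
    using snorm_tri[OF assms, of "a *\<^sub>R x" "b *\<^sub>R y"] snorm_hom[OF assms] xy by simp
  also have "\<dots> \<le> 1"
  proof -
    have "a * p x \<le> a * 1" "b * p y \<le> b * 1" using xy by (auto intro!: mult_left_le)
    thus ?thesis using xy by linarith
  qed
  finally show "a *\<^sub>R x + b *\<^sub>R y \<in> {v. p v \<le> 1 \<and> inner u v = 1}"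
    using xy by (simp add: inner_add_right)
qed

lemma snorm_convex_ball:
  assumes "snorm p" shows "convex {v. p v \<le> 1}"
proof (rule convexI)
  fix x y :: 'a and a b :: real assume xy: "x \<in> {v. p v \<le> 1}" "y \<in> {v. p v \<le> 1}" "0 \<le> a" "0 \<le> b" "a + b = 1"
  have "p (a *\<^sub>R x + b *\<^sub>R y) \<le> a * p x + b * p y"
    using snorm_tri[OF assms, of "a *\<^sub>R x" "b *\<^sub>R y"] snorm_hom[OF assms] xy by simp
  also have "\<dots> \<le> 1"
  proof -
    have "a * p x \<le> a * 1" "b * p y \<le> b * 1" using xy by (auto intro!: mult_left_le)
    thus ?thesis using xy by linarith
  qed
  finally show "a *\<^sub>R x + b *\<^sub>R y \<in> {v. p v \<le> 1}" by simp
qed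

lemma ext_sphere:
  assumes p: "snorm p" and e: "p e = 1" and x: "ext_pt {v. p v \<le> 1} x"
  shows "p x = 1"
proof (rule ccontr)
  assume ne: "p x \<noteq> 1"
  have px: "p x \<le> 1" using x by (simp add: ext_pt_def)
  show False
  proof (cases "x = 0")
    case True
    have "e + (- e) = 2 *\<^sub>R x" using True by simp
    moreover have "p e \<le> 1" "p (-e) \<le> 1" using e snorm_minus[OF p] by auto
    ultimately have "x = e" using x by (auto simp: ext_pt_def)
    thus False using True e snorm_0[OF p] by simp
  next
    case False
    hence pos: "0 < p x" using snorm_nonneg[OF p, of x] snorm_zero[OF p, of x] by force
    have lt: "p x < 1" using px ne by simp
    define y where "y = (1 / p x) *\<^sub>R x"
    define z where "z = (2 - 1 / p x) *\<^sub>R x"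
    have py: "p y = 1" using pos by (simp add: y_def snorm_hom[OF p])
    have "p z = \<bar>2 - 1 / p x\<bar> * p x" by (simp add: z_def snorm_hom[OF p])
    also have "\<dots> = \<bar>2 * p x - 1\<bar>"
    proof -
      have eq: "(2 - 1 / p x) * p x = 2 * p x - 1" using pos by (simp add: field_simps)
      show ?thesis by (metis abs_mult abs_of_pos eq pos)
    qed
    also have "\<dots> \<le> 1" using pos lt by auto
    finally have pz: "p z \<le> 1" .
    have "y + z = 2 *\<^sub>R x" by (simp add: y_def z_def scaleR_add_left[symmetric])
    hence "x = y" using x py pz by (auto simp: ext_pt_def)
    thus False using py lt by simp
  qed
qed

lemma ext_iso:
  assumes "linear T" "linear T'" "\<And>v. T' (T v) = v" "\<And>v. T (T' v) = v"
    "\<And>v. p (T v) = p v" "\<And>v. p (T' v) = p v"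
    "ext_pt {v. p v \<le> 1} x"
  shows "ext_pt {v. p v \<le> 1} (T x)"
proof -
  interpret T': linear T' by fact
  interpret T: linear T by fact
  have "T x = y \<and> T x = z" if yz: "p y \<le> 1" "p z \<le> 1" "y + z = 2 *\<^sub>R T x" for y z
  proof -
    have "T' y + T' z = 2 *\<^sub>R x" using yz(3) assms(3)
      by (metis T'.add T'.scale)
    moreover have "p (T' y) \<le> 1" "p (T' z) \<le> 1" using assms(6) yz by auto
    ultimately have "x = T' y \<and> x = T' z" using assms(7) unfolding ext_pt_def by blast
    thus ?thesis using assms(4) by metis
  qed
  thus ?thesis using assms(5,7) by (auto simp: ext_pt_def)
qed

lemma zorn_max:
  fixes S G0 :: "'a::real_vector set"
  assumes "convex G0" "G0 \<subseteq> S"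
  shows "\<exists>G. max_convex_subset S G \<and> G0 \<subseteq> G"
proof -
  define A where "A = {G. convex G \<and> G \<subseteq> S \<and> G0 \<subseteq> G}"
  have "\<exists>U\<in>A. \<forall>X\<in>C. X \<subseteq> U" if C: "C \<in> chains A" for C
  proof (cases "C = {}")
    case True thus ?thesis using assms by (auto simp: A_def)
  next
    case False
    have ch: "C \<subseteq> A" "\<forall>X\<in>C. \<forall>Y\<in>C. X \<subseteq> Y \<or> Y \<subseteq> X"
      using C by (auto simp: chains_def chain_subset_def)
    have "convex (\<Union>C)"
    proof (rule convexI)
      fix x y :: 'a and u v :: real
      assume xy: "x \<in> \<Union>C" "y \<in> \<Union>C" "0 \<le> u" "0 \<le> v" "u + v = 1"
      then obtain X Y where XY: "X \<in> C" "Y \<in> C" "x \<in> X" "y \<in> Y" by auto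
      then obtain Z where Z: "Z \<in> C" "x \<in> Z" "y \<in> Z" using ch(2) by blast
      have "convex Z" using Z ch(1) by (auto simp: A_def)
      hence "u *\<^sub>R x + v *\<^sub>R y \<in> Z" using Z xy by (auto intro: convexD)
      thus "u *\<^sub>R x + v *\<^sub>R y \<in> \<Union>C" using Z by auto
    qed
    moreover have "\<Union>C \<subseteq> S" "G0 \<subseteq> \<Union>C" using ch(1) False by (auto simp: A_def)
    ultimately have "\<Union>C \<in> A" by (simp add: A_def)
    thus ?thesis by auto
  qed
  then obtain M where M: "M \<in> A" "\<forall>X\<in>A. M \<subseteq> X \<longrightarrow> X = M"
    using Zorn_Lemma2[of A] by blast
  have "max_convex_subset S M"
    unfolding max_convex_subset_def
  proof (intro conjI allI impI)
    show "convex M" "M \<subseteq> S" using M(1) by (auto simp: A_def)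
    fix G assume "convex G \<and> G \<subseteq> S \<and> M \<subseteq> G"
    moreover hence "G \<in> A" using M(1) by (auto simp: A_def)
    ultimately show "G = M" using M(2) by auto
  qed
  thus ?thesis using M(1) by (auto simp: A_def)
qed

lemma separation:
  fixes p :: "'a::euclidean_space \<Rightarrow> real"
  assumes p: "snorm p" and C: "convex C" "C \<noteq> {}" "\<forall>c\<in>C. p c = 1"
  shows "\<exists>u. (\<forall>v. inner u v \<le> p v) \<and> (\<forall>c\<in>C. inner u c = 1)"
proof -
  define U where "U = {v. p v < 1}"
  have "convex U" using snorm_convex_lt[OF p] by (simp add: U_def)
  moreover have "0 \<in> U" using snorm_0[OF p] by (auto simp: U_def)
  moreover hence "U \<noteq> {}" by auto
  moreover have "U \<inter> C = {}" using C by (auto simp: U_def)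
  ultimately obtain a b where ab: "a \<noteq> 0" "\<forall>x\<in>U. inner a x \<le> b" "\<forall>x\<in>C. inner a x \<ge> b"
    using separating_hyperplane_sets[of U C] C by blast
  have b0: "0 \<le> b" using ab(2) \<open>0 \<in> U\<close> by force
  have key: "inner a v \<le> b * p v" for v
  proof (cases "v = 0")
    case True thus ?thesis using snorm_0[OF p] by simp
  next
    case False
    hence pv: "0 < p v" using snorm_nonneg[OF p, of v] snorm_zero[OF p, of v] by force
    show ?thesis
    proof (rule ccontr)
      assume "\<not> ?thesis"
      hence lt: "b * p v < inner a v" by simp
      have bp: "0 \<le> b * p v" using b0 pv by simp
      define s where "s = (b * p v + inner a v) / (2 * inner a v)"
      have av: "0 < inner a v" using lt bp by linarith
      have s0: "0 < s" using av bp by (simp add: s_def)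
      have s1: "s < 1" using av lt by (simp add: s_def field_simps)
      have "p ((s / p v) *\<^sub>R v) = s" using pv s0 by (simp add: snorm_hom[OF p])
      hence "(s / p v) *\<^sub>R v \<in> U" using s1 by (simp add: U_def)
      hence "(s / p v) * inner a v \<le> b" using ab(2) by fastforce
      hence "s * inner a v \<le> b * p v" using pv by (simp add: field_simps)
      moreover have "s * inner a v = (b * p v + inner a v) / 2" using av by (simp add: s_def)
      ultimately show False using lt by argo
    qed
  qed
  have bpos: "0 < b"
  proof (rule ccontr)
    assume "\<not> 0 < b" hence "b = 0" using b0 by simp
    hence "inner a a \<le> 0" using key[of a] by simp
    thus False using ab(1) inner_gt_zero_iff[of a] by linarith
  qed
  have onC: "inner a c = b" if "c \<in> C" for c
    using key[of c] ab(3) C(3) that by force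
  show ?thesis
  proof (intro exI conjI allI ballI)
    fix v show "inner ((1 / b) *\<^sub>R a) v \<le> p v" using key[of v] bpos by (simp add: field_simps)
  next
    fix c assume "c \<in> C" thus "inner ((1 / b) *\<^sub>R a) c = 1" using onC bpos by simp
  qed
qed

lemma maxface:
  fixes p :: "'a::euclidean_space \<Rightarrow> real"
  assumes p: "snorm p" and e: "p e = 1" and F: "max_convex_subset {v. p v = 1} F"
  shows "\<exists>u. (\<forall>v. inner u v \<le> p v) \<and> F = {v. p v \<le> 1 \<and> inner u v = 1}"
proof -
  have cF: "convex F" "F \<subseteq> {v. p v = 1}" using F by (auto simp: max_convex_subset_def)
  have "F \<noteq> {}"
  proof
    assume "F = {}"
    hence "{e} = F" using F e unfolding max_convex_subset_def by (metis convex_singleton empty_subsetI insert_subset mem_Collect_eq)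
    thus False using \<open>F = {}\<close> by simp
  qed
  then obtain u where u: "\<forall>v. inner u v \<le> p v" "\<forall>c\<in>F. inner u c = 1"
    using separation[OF p cF(1)] cF(2) by blast
  let ?H = "{v. p v \<le> 1 \<and> inner u v = 1}"
  have "convex ?H" by (rule snorm_convex_face[OF p])
  moreover have "?H \<subseteq> {v. p v = 1}"
  proof
    fix v assume "v \<in> ?H" thus "v \<in> {v. p v = 1}" using u(1)[rule_format, of v] by auto
  qed
  moreover have "F \<subseteq> ?H" using u(2) cF(2) by auto
  ultimately have "?H = F" using F unfolding max_convex_subset_def by blast
  thus ?thesis using u by auto
qed



definition absv :: "real ^ 'n \<Rightarrow> real ^ 'n" where "absv x = (\<chi> k. \<bar>x $ k\<bar>)"
definition modv :: "complex ^ 'n \<Rightarrow> real ^ 'n" where "modv z = (\<chi> k. cmod (z $ k))"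
definition flip :: "'n \<Rightarrow> real ^ 'n \<Rightarrow> real ^ 'n" where
  "flip j x = (\<chi> k. if k = j then - x $ k else x $ k)"

lemma absv_nth[simp]: "absv x $ k = \<bar>x $ k\<bar>" by (simp add: absv_def)
lemma modv_nth[simp]: "modv z $ k = cmod (z $ k)" by (simp add: modv_def)
lemma flip_nth[simp]: "flip j x $ k = (if k = j then - x $ k else x $ k)" by (simp add: flip_def)
lemma cplx_of_nth[simp]: "cplx_of x $ k = complex_of_real (x $ k)" by (simp add: cplx_of_def)

lemma snorm_compact:
  fixes p :: "'a::euclidean_space \<Rightarrow> real"
  assumes p: "snorm p" and L: "0 \<le> L" "\<And>v. p v \<le> L * norm v" and K: "\<And>v. norm v \<le> K * p v"
  shows "compact {v. p v \<le> 1}"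
proof -
  have "L-lipschitz_on UNIV p"
  proof (rule lipschitz_onI)
    fix x y :: 'a
    have "p x \<le> p y + p (x - y)" using snorm_tri[OF p, of y "x - y"] by simp
    moreover have "p y \<le> p x + p (y - x)" using snorm_tri[OF p, of x "y - x"] by simp
    moreover have "p (y - x) = p (x - y)" using snorm_minus[OF p, of "x - y"] by simp
    ultimately have "\<bar>p x - p y\<bar> \<le> p (x - y)" by linarith
    also have "\<dots> \<le> L * norm (x - y)" by (rule L(2))
    finally show "dist (p x) (p y) \<le> L * dist x y" by (simp add: dist_norm dist_real_def)
  qed (rule L(1))
  hence c: "continuous_on UNIV p" by (rule lipschitz_on_continuous_on)
  have "closed {v. p v \<le> 1}" by (rule closed_Collect_le[OF c continuous_on_const])
  moreover have "bounded {v. p v \<le> 1}"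
    unfolding bounded_iff
  proof (intro exI ballI)
    fix v assume "v \<in> {v. p v \<le> 1}"
    hence "p v \<le> 1" by simp
    have "norm v \<le> K * p v" by (rule K)
    also have "\<dots> \<le> \<bar>K\<bar>"
      using \<open>p v \<le> 1\<close> snorm_nonneg[OF p, of v]
      by (metis abs_ge_self abs_mult abs_of_nonneg mult_left_le order_trans abs_ge_zero)
    finally show "norm v \<le> \<bar>K\<bar>" .
  qed
  ultimately show ?thesis by (simp add: compact_eq_bounded_closed)
qed

definition rot :: "('n \<Rightarrow> complex) \<Rightarrow> complex ^ 'n \<Rightarrow> complex ^ 'n" where
  "rot q z = (\<chi> k. q k * z $ k)"
lemma rot_nth[simp]: "rot q z $ k = q k * z $ k" by (simp add: rot_def)

lemma linear_rot: "linear (rot q)"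
  by (rule linearI) (simp_all add: vec_eq_iff algebra_simps scaleR_conv_of_real)
lemma linear_flip: "linear (flip j)"
  by (rule linearI) (simp_all add: vec_eq_iff algebra_simps)
lemma linear_cplx_of: "linear (cplx_of :: real ^ 'n \<Rightarrow> complex ^ 'n)"
proof (rule linearI)
  fix b1 b2 :: "real ^ 'n" and r :: real
  show "cplx_of (b1 + b2) = cplx_of b1 + cplx_of b2" by (simp add: vec_eq_iff)
  show "cplx_of (r *\<^sub>R b1) = r *\<^sub>R cplx_of b1"
    unfolding vec_eq_iff vector_scaleR_component cplx_of_nth by (simp add: scaleR_conv_of_real)
qed

lemma cnj_mult_unit: "cmod q = 1 \<Longrightarrow> cnj q * q = 1"
  by (metis complex_norm_square mult.commute of_real_1 power_one)

lemma sum_single: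
  fixes g :: "'n::finite \<Rightarrow> 'b::comm_monoid_add"
  assumes "\<And>k. k \<noteq> j \<Longrightarrow> g k = 0" shows "(\<Sum>k\<in>UNIV. g k) = g j"
proof -
  have "(\<Sum>k\<in>UNIV. g k) = g j + (\<Sum>k\<in>UNIV - {j}. g k)" by (simp add: sum.remove)
  also have "(\<Sum>k\<in>UNIV - {j}. g k) = 0" using assms by (intro sum.neutral) auto
  finally show ?thesis by simp
qed

lemma sum_eq_termwise:
  fixes f g :: "'n::finite \<Rightarrow> real"
  assumes "\<And>k. f k \<le> g k" "(\<Sum>k\<in>UNIV. g k) \<le> (\<Sum>k\<in>UNIV. f k)"
  shows "f k = g k"
proof -
  have "(\<Sum>k\<in>UNIV. g k - f k) = 0"
    using assms sum_mono[of UNIV f g] by (simp add: sum_subtractf)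
  hence "\<forall>k\<in>UNIV. g k - f k = 0" using assms(1) by (subst sum_nonneg_eq_0_iff[symmetric]) auto
  thus ?thesis by simp
qed

lemma cmod_sq: "(cmod (a + b))\<^sup>2 + (cmod (a - b))\<^sup>2 = 2 * (cmod a)\<^sup>2 + 2 * (cmod b)\<^sup>2"
  by (simp only: cmod_power2) (simp add: power2_eq_square algebra_simps)

lemma flip_lemma:
  fixes t :: "'n::finite \<Rightarrow> complex"
  assumes s: "(\<Sum>k\<in>UNIV. cmod (t k)) \<le> 1" and a1: "1 \<le> cmod (\<Sum>k\<in>UNIV. t k)"
    and a2: "1 \<le> cmod ((\<Sum>k\<in>UNIV. t k) - 2 * t j)" and tj: "t j \<noteq> 0"
  shows "cmod (t j) = 1 \<and> (\<forall>k. k \<noteq> j \<longrightarrow> t k = 0)"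
proof -
  define A where "A = (\<Sum>k\<in>UNIV - {j}. t k)"
  define S' where "S' = (\<Sum>k\<in>UNIV - {j}. cmod (t k))"
  have sumt: "(\<Sum>k\<in>UNIV. t k) = t j + A" by (simp add: A_def sum.remove)
  have sumc: "(\<Sum>k\<in>UNIV. cmod (t k)) = cmod (t j) + S'" by (simp add: S'_def sum.remove)
  have AS: "cmod A \<le> S'" unfolding A_def S'_def by (rule norm_sum)
  have S0: "0 \<le> S'" unfolding S'_def by (intro sum_nonneg) auto
  let ?a = "cmod A" and ?b = "cmod (t j)"
  have b0: "0 < ?b" using tj by simp
  have ab: "?a + ?b \<le> 1" using s sumc AS by linarith
  have p1: "1 \<le> cmod (A + t j)" using a1 sumt by (simp add: add.commute)
  have p2: "1 \<le> cmod (A - t j)" using a2 sumt by (simp add: algebra_simps)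
  have "1 \<le> (cmod (A + t j))\<^sup>2" "1 \<le> (cmod (A - t j))\<^sup>2" using p1 p2
    by (simp_all add: one_le_power)
  hence "2 \<le> 2 * ?a\<^sup>2 + 2 * ?b\<^sup>2" using cmod_sq[of A "t j"] by linarith
  moreover have "(?a + ?b)\<^sup>2 \<le> 1" using ab b0 norm_ge_zero[of A]
    by (metis add_nonneg_nonneg less_imp_le power_le_one)
  ultimately have "?a * ?b \<le> 0" by (simp add: power2_eq_square algebra_simps)
  hence "?a = 0" using b0 norm_ge_zero[of A] by (metis mult_pos_pos order_le_less not_le)
  hence "A = 0" by simp
  hence "1 \<le> ?b" using a1 sumt by simp
  hence b1: "?b = 1" and "S' = 0" using ab s sumc S0 by linarith+
  hence "\<forall>k\<in>UNIV - {j}. cmod (t k) = 0" unfolding S'_def by (subst sum_nonneg_eq_0_iff[symmetric]) auto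
  thus ?thesis using b1 by auto
qed

lemma inner_R: "inner f (x :: real ^ 'n) = (\<Sum>k\<in>UNIV. f $ k * x $ k)"
  by (simp add: inner_vec_def)
lemma inner_C: "inner u (w :: complex ^ 'n) = (\<Sum>k\<in>UNIV. Re (cnj (u $ k) * w $ k))"
  by (simp add: inner_vec_def inner_complex_def)

lemma Re_cnj_le: "Re (cnj a * b) \<le> cmod a * cmod b"
  by (metis complex_Re_le_cmod complex_mod_cnj norm_mult)

lemma inner_flip: "inner f (flip j x) = inner f x - 2 * (f $ j * x $ j)"
proof -
  have "inner f (flip j x) = (\<Sum>k\<in>UNIV. f $ k * x $ k - (if k = j then 2 * (f $ j * x $ j) else 0))"
    unfolding inner_R by (intro sum.cong) auto
  thus ?thesis by (simp add: sum_subtractf inner_R)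
qed

locale absn =
  fixes N :: "real ^ 'n \<Rightarrow> real"
  assumes an: "absolute_norm N"
begin

lemma N_nonneg: "0 \<le> N x" using an by (simp add: absolute_norm_def)
lemma N_zero: "N x = 0 \<longleftrightarrow> x = 0" using an by (simp add: absolute_norm_def)
lemma N_smult: "N (c *s x) = \<bar>c\<bar> * N x" using an by (simp add: absolute_norm_def)
lemma N_scaleR: "N (c *\<^sub>R x) = \<bar>c\<bar> * N x" using N_smult by (simp add: scalar_mult_eq_scaleR)
lemma N_tri: "N (x + y) \<le> N x + N y" using an by (simp add: absolute_norm_def)
lemma N_absv: "N (absv x) = N x" using an by (simp add: absolute_norm_def absv_def)
lemma N_axis: "N (axis i 1) = 1" using an by (simp add: absolute_norm_def)
lemma N_snorm: "snorm N" using N_scaleR N_tri N_zero by (simp add: snorm_def)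

lemma N_eq_absv: assumes "\<And>k. \<bar>a $ k\<bar> = \<bar>b $ k\<bar>" shows "N a = N b"
proof -
  have "absv a = absv b" using assms by (simp add: vec_eq_iff)
  thus ?thesis by (metis N_absv)
qed

lemma N_flip: "N (flip j x) = N x"
  by (rule N_eq_absv) simp

lemma mono1:
  assumes "\<forall>k. k \<noteq> j \<longrightarrow> a $ k = b $ k" "\<bar>a $ j\<bar> \<le> \<bar>b $ j\<bar>"
  shows "N a \<le> N b"
proof (cases "b $ j = 0")
  case True
  have "\<forall>k. a $ k = b $ k"
  proof
    fix k show "a $ k = b $ k" using True assms by (cases "k = j") auto
  qed
  hence "a = b" by (simp add: vec_eq_iff)
  thus ?thesis by simp
next
  case False
  define t where "t = (1 + a $ j / b $ j) / 2"
  have r: "\<bar>a $ j / b $ j\<bar> \<le> 1" using assms(2) False by (simp only: abs_divide) (simp add: divide_le_eq_1)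
  have t: "0 \<le> t" "t \<le> 1" using r unfolding t_def abs_le_iff by auto
  have "a = (1 - t) *\<^sub>R flip j b + t *\<^sub>R b"
  proof (subst vec_eq_iff, intro allI)
    fix k show "a $ k = ((1 - t) *\<^sub>R flip j b + t *\<^sub>R b) $ k"
    proof (cases "k = j")
      case True thus ?thesis using False by (simp add: t_def field_simps)
    next
      case False thus ?thesis using assms(1) by (simp add: algebra_simps)
    qed
  qed
  hence "N a \<le> (1 - t) * N (flip j b) + t * N b"
    using snorm_convex_comb[OF N_snorm t] by simp
  thus ?thesis by (simp add: N_flip algebra_simps)
qed

lemma mono_aux:
  assumes "finite I"
  shows "\<forall>a b. (\<forall>k. \<bar>a $ k\<bar> \<le> \<bar>b $ k\<bar>) \<longrightarrow> (\<forall>k. k \<notin> I \<longrightarrow> a $ k = b $ k) \<longrightarrow> N a \<le> N b"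
  using assms
proof (induction I rule: finite_induct)
  case empty thus ?case by (metis order_refl vec_eq_iff empty_iff)
next
  case (insert j I)
  show ?case
  proof (intro allI impI)
    fix a b :: "real ^ 'n"
    assume ab: "\<forall>k. \<bar>a $ k\<bar> \<le> \<bar>b $ k\<bar>" "\<forall>k. k \<notin> insert j I \<longrightarrow> a $ k = b $ k"
    define m where "m = (\<chi> k. if k = j then a $ k else b $ k)"
    have "N a \<le> N m" using insert.IH ab by (auto simp: m_def)
    also have "N m \<le> N b" by (rule mono1[of j]) (use ab in \<open>auto simp: m_def\<close>)
    finally show "N a \<le> N b" .
  qed
qed

lemma mono: "(\<And>k. \<bar>a $ k\<bar> \<le> \<bar>b $ k\<bar>) \<Longrightarrow> N a \<le> N b"
  using mono_aux[of UNIV] by auto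

lemma comp_le: "\<bar>x $ k\<bar> \<le> N x"
proof -
  have "N (\<bar>x $ k\<bar> *s axis k 1) \<le> N x" by (rule mono) (auto simp: axis_def)
  thus ?thesis by (simp add: N_smult N_axis)
qed

abbreviation "NC \<equiv> cplx_norm N"

lemma NC_def: "NC z = N (modv z)" by (simp add: cplx_norm_def modv_def)

lemma NC_cplx: "NC (cplx_of x) = N x"
proof -
  have "modv (cplx_of x) = absv x" by (simp add: vec_eq_iff)
  thus ?thesis by (simp add: NC_def N_absv)
qed

lemma NC_smult: "NC (c *s z) = cmod c * NC z"
proof -
  have "modv (c *s z) = cmod c *s modv z" by (simp add: vec_eq_iff norm_mult)
  thus ?thesis by (simp add: NC_def N_smult)
qed

lemma NC_scaleR: "NC (c *\<^sub>R z) = \<bar>c\<bar> * NC z"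
proof -
  have "modv (c *\<^sub>R z) = \<bar>c\<bar> *s modv z" by (simp add: vec_eq_iff)
  thus ?thesis by (simp add: NC_def N_smult)
qed

lemma NC_tri: "NC (z + w) \<le> NC z + NC w"
proof -
  have "N (modv (z + w)) \<le> N (modv z + modv w)"
    by (rule mono) (simp add: norm_triangle_ineq)
  thus ?thesis using N_tri[of "modv z" "modv w"] by (simp add: NC_def)
qed

lemma NC_zero: "NC z = 0 \<Longrightarrow> z = 0"
  by (simp add: NC_def N_zero vec_eq_iff)

lemma NC_snorm: "snorm NC" using NC_scaleR NC_tri NC_zero by (simp add: snorm_def)

lemma NC_axis: "NC (cplx_of (axis i 1)) = 1" by (simp add: NC_cplx N_axis)

lemma comp_le_C: "cmod (z $ k) \<le> NC z"
  using comp_le[of "modv z" k] by (simp add: NC_def)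

lemma part1: "ext_pt {y. N y \<le> 1} x \<longleftrightarrow> ext_pt {z. NC z \<le> 1} (cplx_of x)"
proof
  assume e: "ext_pt {z. NC z \<le> 1} (cplx_of x)"
  have "x = y \<and> x = z" if yz: "N y \<le> 1" "N z \<le> 1" "y + z = 2 *\<^sub>R x" for y z
  proof -
    have c: "y $ k + z $ k = 2 * x $ k" for k using arg_cong[OF yz(3), of "\<lambda>v. v $ k"] by simp
    have "cplx_of y + cplx_of z = 2 *\<^sub>R cplx_of x"
    proof (subst vec_eq_iff, intro allI)
      fix k
      have "complex_of_real (y $ k) + complex_of_real (z $ k) = complex_of_real (2 * x $ k)"
        using c[of k] by (metis of_real_add)
      thus "(cplx_of y + cplx_of z) $ k = (2 *\<^sub>R cplx_of x) $ k" by (simp add: scaleR_conv_of_real)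
    qed
    moreover have "NC (cplx_of y) \<le> 1" "NC (cplx_of z) \<le> 1" using yz NC_cplx by auto
    ultimately have "cplx_of x = cplx_of y \<and> cplx_of x = cplx_of z" using e unfolding ext_pt_def by blast
    thus ?thesis by (metis cplx_of_nth of_real_eq_iff vec_eq_iff)
  qed
  moreover have "N x \<le> 1" using e by (simp add: ext_pt_def NC_cplx)
  ultimately show "ext_pt {y. N y \<le> 1} x" by (auto simp: ext_pt_def)
next
  assume e: "ext_pt {y. N y \<le> 1} x"
  have "cplx_of x = y \<and> cplx_of x = z" if yz: "NC y \<le> 1" "NC z \<le> 1" "y + z = 2 *\<^sub>R cplx_of x" for y z
  proof -
    have comp: "y $ k + z $ k = 2 * complex_of_real (x $ k)" for k
      using arg_cong[OF yz(3), of "\<lambda>v. v $ k"] by (simp add: scaleR_conv_of_real)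
    define ry where "ry = (\<chi> k. Re (y $ k))"
    define rz where "rz = (\<chi> k. Re (z $ k))"
    have "ry + rz = 2 *\<^sub>R x"
    proof (subst vec_eq_iff, intro allI)
      fix k show "(ry + rz) $ k = (2 *\<^sub>R x) $ k" using arg_cong[OF comp[of k], of Re] by (simp add: ry_def rz_def)
    qed
    moreover have "N ry \<le> N (modv y)" by (rule mono) (simp add: ry_def abs_Re_le_cmod)
    hence "N ry \<le> 1" using yz(1) by (simp add: NC_def)
    moreover have "N rz \<le> N (modv z)" by (rule mono) (simp add: rz_def abs_Re_le_cmod)
    hence "N rz \<le> 1" using yz(2) by (simp add: NC_def)
    ultimately have rx: "x = ry" using e by (auto simp: ext_pt_def)
    define p where "p = (\<chi> k. if 0 \<le> x $ k then cmod (y $ k) else - cmod (y $ k))"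
    define q where "q = 2 *\<^sub>R x - p"
    have xle: "\<bar>x $ k\<bar> \<le> cmod (y $ k)" for k using abs_Re_le_cmod[of "y $ k"] rx by (simp add: ry_def)
    have "N p = N (modv y)" by (rule N_eq_absv) (simp add: p_def)
    hence "N p \<le> 1" using yz(1) by (simp add: NC_def)
    moreover have "N q \<le> N (modv y)"
    proof (rule mono)
      fix k show "\<bar>q $ k\<bar> \<le> \<bar>modv y $ k\<bar>" using xle[of k] by (simp add: q_def p_def abs_le_iff)
    qed
    hence "N q \<le> 1" using yz(1) by (simp add: NC_def)
    moreover have "p + q = 2 *\<^sub>R x" by (simp add: q_def)
    ultimately have "x = p" using e by (auto simp: ext_pt_def)
    have cm: "cmod (y $ k) = \<bar>x $ k\<bar>" for k
    proof -
      have "x $ k = p $ k" using \<open>x = p\<close> by simp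
      thus ?thesis by (cases "0 \<le> x $ k") (auto simp: p_def)
    qed
    have yk: "y $ k = complex_of_real (x $ k)" for k
    proof -
      have re: "Re (y $ k) = x $ k" using rx by (simp add: ry_def vec_eq_iff)
      have "(cmod (y $ k))\<^sup>2 = (Re (y $ k))\<^sup>2 + (Im (y $ k))\<^sup>2" by (simp add: cmod_power2)
      hence "Im (y $ k) = 0" using cm[of k] re by simp
      thus ?thesis using re by (simp add: complex_eq_iff)
    qed
    hence "y = cplx_of x" by (simp add: vec_eq_iff)
    moreover have "z = 2 *\<^sub>R cplx_of x - y" using yz(3) by (metis add_diff_cancel_left')
    hence "z = cplx_of x" using \<open>y = cplx_of x\<close> by (simp add: scaleR_2)
    ultimately show ?thesis by simp
  qed
  moreover have "NC (cplx_of x) \<le> 1" using e by (simp add: ext_pt_def NC_cplx)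
  ultimately show "ext_pt {z. NC z \<le> 1} (cplx_of x)" by (auto simp: ext_pt_def)
qed

abbreviation "extR x \<equiv> ext_pt {y. N y \<le> 1} x"
abbreviation "extC z \<equiv> ext_pt {y. NC y \<le> 1} z"

lemma extR_norm: "extR x \<Longrightarrow> N x = 1"
  by (rule ext_sphere[OF N_snorm N_axis])
lemma extC_norm: "extC z \<Longrightarrow> NC z = 1"
  by (rule ext_sphere[OF NC_snorm NC_axis])

lemma extR_flip: "extR x \<Longrightarrow> extR (flip j x)"
  by (rule ext_iso[OF linear_flip[of j] linear_flip[of j]]) (simp_all add: vec_eq_iff N_flip)

lemma NC_rot: "(\<And>k. cmod (q k) = 1) \<Longrightarrow> NC (rot q z) = NC z"
proof -
  assume "\<And>k. cmod (q k) = 1"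
  hence "modv (rot q z) = modv z" by (simp add: vec_eq_iff norm_mult)
  thus ?thesis by (simp add: NC_def)
qed

lemma extC_rot:
  assumes "\<And>k. cmod (q k) = 1" "extC z" shows "extC (rot q z)"
proof (rule ext_iso[OF linear_rot[of q] linear_rot[of "\<lambda>k. cnj (q k)"]])
  show "rot (\<lambda>k. cnj (q k)) (rot q v) = v" for v
    using assms(1) by (simp add: vec_eq_iff cnj_mult_unit mult.assoc[symmetric])
  show "rot q (rot (\<lambda>k. cnj (q k)) v) = v" for v
    using assms(1) by (simp add: vec_eq_iff cnj_mult_unit mult.assoc[symmetric] mult.commute[of "q _"])
  show "NC (rot q v) = NC v" for v using NC_rot assms(1) by simp
  show "NC (rot (\<lambda>k. cnj (q k)) v) = NC v" for v using NC_rot assms(1) by simp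
qed (rule assms(2))

lemma extC_modv: assumes "extC z" shows "extR (modv z)"
proof -
  define q where "q k = (if z $ k = 0 then 1 else cnj (z $ k) / complex_of_real (cmod (z $ k)))" for k
  have q: "cmod (q k) = 1" for k by (simp add: q_def norm_divide)
  have "rot q z = cplx_of (modv z)"
  proof (subst vec_eq_iff, intro allI)
    fix k show "rot q z $ k = cplx_of (modv z) $ k"
      by (simp add: q_def complex_norm_square[symmetric] power2_eq_square mult.commute)
  qed
  thus ?thesis using extC_rot[of q z, OF q assms] part1[of "modv z"] by simp
qed

lemma ball_compact: "compact {v. N v \<le> 1}"
proof (rule snorm_compact[OF N_snorm])
  show "0 \<le> N (\<chi> k. 1)" by (rule N_nonneg)
  fix v :: "real ^ 'n"
  have "N v \<le> N (norm v *s (\<chi> k. 1))" by (rule mono) (simp add: component_le_norm_cart)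
  thus "N v \<le> N (\<chi> k. 1) * norm v" by (simp add: N_smult mult.commute)
  have "norm v \<le> (\<Sum>k\<in>UNIV. \<bar>v $ k\<bar>)" by (rule norm_le_l1_cart)
  also have "\<dots> \<le> (\<Sum>(k::'n)\<in>UNIV. N v)" by (intro sum_mono comp_le)
  finally show "norm v \<le> real CARD('n) * N v" by simp
qed

lemma ballC_compact: "compact {v. NC v \<le> 1}"
proof (rule snorm_compact[OF NC_snorm])
  show "0 \<le> N (\<chi> k. 1)" by (rule N_nonneg)
  fix v :: "complex ^ 'n"
  have "N (modv v) \<le> N (norm v *s (\<chi> k. 1))" by (rule mono) (simp add: Finite_Cartesian_Product.norm_nth_le)
  thus "NC v \<le> N (\<chi> k. 1) * norm v" by (simp add: N_smult NC_def mult.commute)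
  have "norm v \<le> (\<Sum>k\<in>UNIV. norm (v $ k))" unfolding norm_vec_def by (rule L2_set_le_sum) simp
  also have "\<dots> \<le> (\<Sum>(k::'n)\<in>UNIV. NC v)" by (intro sum_mono comp_le_C)
  finally show "norm v \<le> real CARD('n) * NC v" by simp
qed

definition "PR \<longleftrightarrow> (\<forall>F. max_convex_subset {x. N x = 1} F \<longrightarrow> (\<forall>x. extR x \<longrightarrow> x \<in> F \<or> - x \<in> F))"
definition "PC \<longleftrightarrow> (\<forall>G. max_convex_subset {x. NC x = 1} G \<longrightarrow> (\<forall>z. extC z \<longrightarrow> (\<exists>c. cmod c = 1 \<and> c *s z \<in> G)))"

lemma realCL_iff: "real_CL N \<longleftrightarrow> PR"
proof
  assume cl: "real_CL N"
  show PR unfolding PR_def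
  proof (intro allI impI)
    fix F x assume F: "max_convex_subset {x. N x = 1} F" and x: "extR x"
    let ?S = "{c *s x |c x. \<bar>c\<bar> \<le> 1 \<and> x \<in> F}"
    have "{y. N y \<le> 1} = convex hull ?S" using cl F by (simp add: real_CL_def real_aco_def)
    hence "ext_pt (convex hull ?S) x" using x by simp
    hence "x extreme_point_of (convex hull ?S)" using ext_pt_iff_extreme[OF convex_convex_hull] by blast
    hence "x \<in> ?S" by (rule extreme_point_of_convex_hull)
    then obtain c y where cy: "x = c *s y" "\<bar>c\<bar> \<le> 1" "y \<in> F" by blast
    have "N y = 1" using cy F by (auto simp: max_convex_subset_def)
    hence "\<bar>c\<bar> = 1" using extR_norm[OF x] cy by (simp add: N_smult)
    hence "c = 1 \<or> c = -1" by auto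
    thus "x \<in> F \<or> - x \<in> F" using cy by (auto simp: scalar_mult_eq_scaleR)
  qed
next
  assume P: PR
  show "real_CL N" unfolding real_CL_def real_aco_def
  proof (intro allI impI)
    fix F assume F: "max_convex_subset {x. N x = 1} F"
    let ?S = "{c *s x |c x. \<bar>c\<bar> \<le> 1 \<and> x \<in> F}"
    have "?S \<subseteq> {y. N y \<le> 1}"
      using F by (auto simp: max_convex_subset_def N_smult)
    hence h1: "convex hull ?S \<subseteq> {y. N y \<le> 1}"
      by (rule hull_minimal) (rule snorm_convex_ball[OF N_snorm])
    have "{x. x extreme_point_of {y. N y \<le> 1}} \<subseteq> ?S"
    proof
      fix x assume "x \<in> {x. x extreme_point_of {y. N y \<le> 1}}"
      hence "extR x" using ext_pt_iff_extreme[OF snorm_convex_ball[OF N_snorm]] by blast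
      hence "x \<in> F \<or> - x \<in> F" using P F by (auto simp: PR_def)
      moreover have "x = 1 *s x" "x = (-1) *s (- x)" by (simp_all add: scalar_mult_eq_scaleR)
      ultimately show "x \<in> ?S" by (smt (verit) mem_Collect_eq)
    qed
    hence "convex hull {x. x extreme_point_of {y. N y \<le> 1}} \<subseteq> convex hull ?S" by (rule hull_mono)
    hence "{y. N y \<le> 1} \<subseteq> convex hull ?S"
      using Krein_Milman_Minkowski[OF ball_compact snorm_convex_ball[OF N_snorm]] by simp
    thus "{y. N y \<le> 1} = convex hull ?S" using h1 by blast
  qed
qed

lemma complexCL_iff: "complex_CL NC \<longleftrightarrow> PC"
proof
  assume cl: "complex_CL NC"
  show PC unfolding PC_def
  proof (intro allI impI)
    fix F z assume F: "max_convex_subset {x. NC x = 1} F" and x: "extC z"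
    let ?S = "{c *s x |c x. cmod c \<le> 1 \<and> x \<in> F}"
    have "{y. NC y \<le> 1} = convex hull ?S" using cl F by (simp add: complex_CL_def complex_aco_def)
    hence "ext_pt (convex hull ?S) z" using x by simp
    hence "z extreme_point_of (convex hull ?S)" using ext_pt_iff_extreme[OF convex_convex_hull] by blast
    hence "z \<in> ?S" by (rule extreme_point_of_convex_hull)
    then obtain c y where cy: "z = c *s y" "cmod c \<le> 1" "y \<in> F" by blast
    have "NC y = 1" using cy F by (auto simp: max_convex_subset_def)
    hence c1: "cmod c = 1" using extC_norm[OF x] cy by (simp add: NC_smult)
    have "cnj c *s z = y" using cy(1) cnj_mult_unit[OF c1] by (simp add: vector_smult_assoc)
    moreover have "cmod (cnj c) = 1" using c1 by simp
    ultimately show "\<exists>c. cmod c = 1 \<and> c *s z \<in> F" using cy by blast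
  qed
next
  assume P: PC
  show "complex_CL NC" unfolding complex_CL_def complex_aco_def
  proof (intro allI impI)
    fix F assume F: "max_convex_subset {x. NC x = 1} F"
    let ?S = "{c *s x |c x. cmod c \<le> 1 \<and> x \<in> F}"
    have "?S \<subseteq> {y. NC y \<le> 1}"
      using F by (auto simp: max_convex_subset_def NC_smult)
    hence h1: "convex hull ?S \<subseteq> {y. NC y \<le> 1}"
      by (rule hull_minimal) (rule snorm_convex_ball[OF NC_snorm])
    have "{x. x extreme_point_of {y. NC y \<le> 1}} \<subseteq> ?S"
    proof
      fix x assume "x \<in> {x. x extreme_point_of {y. NC y \<le> 1}}"
      hence "extC x" using ext_pt_iff_extreme[OF snorm_convex_ball[OF NC_snorm]] by blast
      then obtain c where c: "cmod c = 1" "c *s x \<in> F" using P F by (auto simp: PC_def)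
      have "x = cnj c *s (c *s x)" using cnj_mult_unit[OF c(1)] by (simp add: vector_smult_assoc)
      moreover have "cmod (cnj c) \<le> 1" using c by simp
      ultimately show "x \<in> ?S" using c(2) by blast
    qed
    hence "convex hull {x. x extreme_point_of {y. NC y \<le> 1}} \<subseteq> convex hull ?S" by (rule hull_mono)
    hence "{y. NC y \<le> 1} \<subseteq> convex hull ?S"
      using Krein_Milman_Minkowski[OF ballC_compact snorm_convex_ball[OF NC_snorm]] by simp
    thus "{y. NC y \<le> 1} = convex hull ?S" using h1 by blast
  qed
qed

lemma dualR_bound:
  assumes D: "\<forall>w. inner f w \<le> N w"
  shows "(\<Sum>k\<in>UNIV. \<bar>f $ k\<bar> * \<bar>y $ k\<bar>) \<le> N y"
proof -
  define w where "w = (\<chi> k. sgn (f $ k) * \<bar>y $ k\<bar>)"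
  have "inner f w = (\<Sum>k\<in>UNIV. \<bar>f $ k\<bar> * \<bar>y $ k\<bar>)"
    unfolding inner_R w_def by (intro sum.cong refl) (simp add: abs_sgn)
  moreover have "N w \<le> N y" by (rule mono) (simp add: w_def abs_mult sgn_if)
  ultimately show ?thesis using D by (metis order_trans)
qed

lemma dualC_bound:
  assumes D: "\<forall>w. inner u w \<le> NC w"
  shows "(\<Sum>k\<in>UNIV. cmod (u $ k) * \<bar>y $ k\<bar>) \<le> N y"
proof -
  define w where "w = (\<chi> k. if u $ k = 0 then 0 else (\<bar>y $ k\<bar> / cmod (u $ k)) *\<^sub>R u $ k)"
  have "inner u w = (\<Sum>k\<in>UNIV. cmod (u $ k) * \<bar>y $ k\<bar>)"
    unfolding inner_C
  proof (intro sum.cong refl)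
    fix k
    show "Re (cnj (u $ k) * w $ k) = cmod (u $ k) * \<bar>y $ k\<bar>"
    proof (cases "u $ k = 0")
      case False
      have "Re (cnj (u $ k) * u $ k) = (cmod (u $ k))\<^sup>2"
        by (metis Re_complex_of_real complex_norm_square mult.commute)
      thus ?thesis using False by (simp add: w_def power2_eq_square)
    qed (simp add: w_def)
  qed
  moreover have "N (modv w) \<le> N y" by (rule mono) (simp add: w_def)
  ultimately show ?thesis using D by (metis order_trans NC_def)
qed

lemma termwise_real:
  assumes "Re z = cmod z" shows "z = complex_of_real (cmod z)"
proof -
  have "(cmod z)\<^sup>2 = (Re z)\<^sup>2 + (Im z)\<^sup>2" by (simp add: cmod_power2)
  hence "Im z = 0" using assms by simp
  thus ?thesis using assms by (simp add: complex_eq_iff)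
qed

lemma M2:
  assumes Du: "\<forall>w. inner u w \<le> NC w"
    and G: "max_convex_subset {w. NC w = 1} {w. NC w \<le> 1 \<and> inner u w = 1}"
  shows "max_convex_subset {x. N x = 1} {x. N x \<le> 1 \<and> inner (modv u) x = 1}"
proof -
  define a where "a = modv u"
  define Fa where "Fa = {x. N x \<le> 1 \<and> inner a x = 1}"
  have Da: "inner a y \<le> N y" for y
  proof -
    have "inner a y \<le> (\<Sum>k\<in>UNIV. cmod (u $ k) * \<bar>y $ k\<bar>)"
      unfolding inner_R a_def by (intro sum_mono) (simp add: mult_left_mono)
    also have "\<dots> \<le> N y" by (rule dualC_bound[OF Du])
    finally show ?thesis .
  qed
  have cFa: "convex Fa" unfolding Fa_def by (rule snorm_convex_face[OF N_snorm])
  have sFa: "Fa \<subseteq> {x. N x = 1}"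
  proof
    fix x assume "x \<in> Fa" thus "x \<in> {x. N x = 1}" using Da[of x] by (simp add: Fa_def)
  qed
  have "H = Fa" if H: "convex H" "H \<subseteq> {x. N x = 1}" "Fa \<subseteq> H" for H
  proof (cases "H = {}")
    case True thus ?thesis using H by auto
  next
    case False
    obtain f where Df: "\<forall>v. inner f v \<le> N v" and fH: "\<forall>h\<in>H. inner f h = 1"
      using separation[OF N_snorm H(1) False] H(2) by auto
    have claim1: "f $ k * y $ k = 0" if y: "y \<in> Fa" and uk: "u $ k = 0" for y k
    proof -
      have "inner a (flip k y) = inner a y" using uk by (simp add: inner_flip a_def)
      hence "flip k y \<in> Fa" using y by (simp add: Fa_def N_flip)
      hence "inner f (flip k y) = 1" "inner f y = 1" using fH H(3) y by auto
      thus ?thesis by (simp add: inner_flip)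
    qed
    define u' where "u' = (\<chi> k. if u $ k = 0 then complex_of_real (f $ k)
                   else complex_of_real (f $ k) * u $ k / complex_of_real (cmod (u $ k)))"
    have cu': "cmod (u' $ k) = \<bar>f $ k\<bar>" for k
      by (simp add: u'_def norm_mult norm_divide)
    have Du': "inner u' w \<le> NC w" for w
    proof -
      have "inner u' w \<le> (\<Sum>k\<in>UNIV. \<bar>f $ k\<bar> * \<bar>modv w $ k\<bar>)"
        unfolding inner_C
      proof (intro sum_mono)
        fix k
        have "Re (cnj (u' $ k) * w $ k) \<le> cmod (u' $ k) * cmod (w $ k)" by (rule Re_cnj_le)
        thus "Re (cnj (u' $ k) * w $ k) \<le> \<bar>f $ k\<bar> * \<bar>modv w $ k\<bar>" by (simp only: cu' modv_nth abs_norm_cancel)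
      qed
      also have "\<dots> \<le> N (modv w)" by (rule dualR_bound[OF Df])
      finally show ?thesis by (simp add: NC_def)
    qed
    define G' where "G' = {w. NC w \<le> 1 \<and> inner u' w = 1}"
    have "{w. NC w \<le> 1 \<and> inner u w = 1} \<subseteq> G'"
    proof
      fix w assume "w \<in> {w. NC w \<le> 1 \<and> inner u w = 1}"
      hence w: "NC w \<le> 1" "inner u w = 1" by auto
      have le: "Re (cnj (u $ k) * w $ k) \<le> cmod (u $ k) * \<bar>modv w $ k\<bar>" for k
        using Re_cnj_le by simp
      have sle: "(\<Sum>k\<in>UNIV. cmod (u $ k) * \<bar>modv w $ k\<bar>) \<le> 1"
        using dualC_bound[OF Du, of "modv w"] w(1) by (simp add: NC_def)
      have s2: "(\<Sum>k\<in>UNIV. Re (cnj (u $ k) * w $ k)) = 1" using w(2) by (simp only: inner_C)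
      have prem: "(\<Sum>k\<in>UNIV. cmod (u $ k) * \<bar>modv w $ k\<bar>) \<le> (\<Sum>k\<in>UNIV. Re (cnj (u $ k) * w $ k))"
        using sle s2 by linarith
      have tw: "Re (cnj (u $ k) * w $ k) = cmod (u $ k) * \<bar>modv w $ k\<bar>" for k
        by (rule sum_eq_termwise[where f="\<lambda>k. Re (cnj (u $ k) * w $ k)" and g="\<lambda>k. cmod (u $ k) * \<bar>modv w $ k\<bar>", OF le prem])
      have "inner a (modv w) = (\<Sum>k\<in>UNIV. cmod (u $ k) * \<bar>modv w $ k\<bar>)"
        by (simp add: inner_R a_def)
      also have "\<dots> = inner u w" unfolding inner_C using tw by simp
      finally have mw: "modv w \<in> Fa" using w by (simp add: Fa_def NC_def)
      have "inner u' w = (\<Sum>k\<in>UNIV. f $ k * modv w $ k)"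
        unfolding inner_C
      proof (intro sum.cong refl)
        fix k show "Re (cnj (u' $ k) * w $ k) = f $ k * modv w $ k"
        proof (cases "u $ k = 0")
          case True
          hence "f $ k * cmod (w $ k) = 0" using claim1[OF mw True] by simp
          thus ?thesis using True by (auto simp: u'_def)
        next
          case False
          have "cnj (u $ k) * w $ k = complex_of_real (cmod (cnj (u $ k) * w $ k))"
            by (rule termwise_real) (use tw[of k] in \<open>simp add: norm_mult\<close>)
          hence "cnj (u' $ k) * w $ k = complex_of_real (f $ k) * (cnj (u $ k) * w $ k) / complex_of_real (cmod (u $ k))"
            using False by (simp add: u'_def)
          also have "\<dots> = complex_of_real (f $ k * cmod (w $ k))"
            using False \<open>cnj (u $ k) * w $ k = _\<close> by (simp add: norm_mult)
          finally show ?thesis by simp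
        qed
      qed
      also have "\<dots> = inner f (modv w)" by (simp add: inner_R)
      also have "\<dots> = 1" using fH H(3) mw by auto
      finally show "w \<in> G'" using w by (simp add: G'_def)
    qed
    moreover have "convex G'" unfolding G'_def by (rule snorm_convex_face[OF NC_snorm])
    moreover have "G' \<subseteq> {w. NC w = 1}"
    proof
      fix x assume "x \<in> G'" thus "x \<in> {x. NC x = 1}" using Du'[of x] by (simp add: G'_def)
    qed
    ultimately have GG: "G' = {w. NC w \<le> 1 \<and> inner u w = 1}"
      using G unfolding max_convex_subset_def by blast
    have "H \<subseteq> Fa"
    proof
      fix h assume h: "h \<in> H"
      define w where "w = (\<chi> k. if u $ k = 0 then complex_of_real (h $ k)
                   else complex_of_real (h $ k) * u $ k / complex_of_real (cmod (u $ k)))"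
      have "modv w = absv h" by (simp add: vec_eq_iff w_def norm_mult norm_divide)
      hence nw: "NC w = N h" by (simp add: NC_def N_absv)
      have "inner u' w = (\<Sum>k\<in>UNIV. f $ k * h $ k)"
        unfolding inner_C
      proof (intro sum.cong refl)
        fix k show "Re (cnj (u' $ k) * w $ k) = f $ k * h $ k"
        proof (cases "u $ k = 0")
          case True thus ?thesis by (simp add: u'_def w_def)
        next
          case False
          have "cnj (u $ k) * u $ k = complex_of_real ((cmod (u $ k))\<^sup>2)"
            by (metis complex_norm_square mult.commute)
          hence "cnj (u' $ k) * w $ k = complex_of_real (f $ k * h $ k)"
            using False by (simp add: u'_def w_def field_simps power2_eq_square)
          thus ?thesis by simp
        qed
      qed
      also have "\<dots> = 1" using fH h by (simp add: inner_R)
      finally have "w \<in> G'" using nw H(2) h by (auto simp: G'_def)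
      hence "inner u w = 1" using GG by auto
      moreover have "inner u w = inner a h"
        unfolding inner_C inner_R a_def
      proof (intro sum.cong refl)
        fix k show "Re (cnj (u $ k) * w $ k) = modv u $ k * h $ k"
        proof (cases "u $ k = 0")
          case True thus ?thesis by (simp add: w_def)
        next
          case False
          have "cnj (u $ k) * u $ k = complex_of_real ((cmod (u $ k))\<^sup>2)"
            by (metis complex_norm_square mult.commute)
          hence "cnj (u $ k) * w $ k = complex_of_real (cmod (u $ k) * h $ k)"
            using False by (simp add: w_def field_simps power2_eq_square)
          thus ?thesis by simp
        qed
      qed
      ultimately show "h \<in> Fa" using H(2) h by (auto simp: Fa_def)
    qed
    thus ?thesis using H(3) by auto
  qed
  thus ?thesis using cFa sFa unfolding max_convex_subset_def Fa_def a_def by blast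
qed

lemma inner_smult_C: "inner u (c *s w) = Re (c * (\<Sum>k\<in>UNIV. cnj (u $ k) * w $ k))"
  unfolding inner_C by (simp add: sum_distrib_left mult.left_commute)

lemma PR_PC: assumes P: PR shows PC
  unfolding PC_def
proof (intro allI impI)
  fix G z assume G: "max_convex_subset {x. NC x = 1} G" and z: "extC z"
  obtain u where Du: "\<forall>v. inner u v \<le> NC v" and Gu: "G = {v. NC v \<le> 1 \<and> inner u v = 1}"
    using maxface[OF NC_snorm NC_axis G] by blast
  define a where "a = modv u"
  define x where "x = modv z"
  have Fa: "max_convex_subset {x. N x = 1} {x. N x \<le> 1 \<and> inner a x = 1}"
    using M2[OF Du] G Gu by (simp add: a_def)
  have x: "extR x" using extC_modv[OF z] by (simp add: x_def)
  have ia: "\<bar>inner a y\<bar> = 1" if "extR y" for y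
  proof -
    have "y \<in> {x. N x \<le> 1 \<and> inner a x = 1} \<or> - y \<in> {x. N x \<le> 1 \<and> inner a x = 1}"
      using P Fa that unfolding PR_def by blast
    thus ?thesis by auto
  qed
  define t where "t k = complex_of_real (cmod (u $ k) * cmod (z $ k))" for k
  have nz: "NC z \<le> 1" using z by (simp add: ext_pt_def)
  have st: "(\<Sum>k\<in>UNIV. cmod (t k)) \<le> 1"
  proof -
    have "(\<Sum>k\<in>UNIV. cmod (t k)) = (\<Sum>k\<in>UNIV. cmod (u $ k) * \<bar>x $ k\<bar>)"
      by (simp add: t_def x_def norm_mult)
    also have "\<dots> \<le> N x" by (rule dualC_bound[OF Du])
    also have "\<dots> \<le> 1" using nz by (simp add: x_def NC_def)
    finally show ?thesis .
  qed
  have sumt: "(\<Sum>k\<in>UNIV. t k) = complex_of_real (inner a x)"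
    unfolding inner_R t_def a_def x_def by simp
  have s1: "1 \<le> cmod (\<Sum>k\<in>UNIV. t k)" using ia[OF x] sumt by simp
  obtain j where tj: "t j \<noteq> 0"
  proof (rule ccontr)
    assume "\<not> thesis"
    hence "\<forall>j. t j = 0" using that by blast
    thus False using s1 by simp
  qed
  have s2: "1 \<le> cmod ((\<Sum>k\<in>UNIV. t k) - 2 * t j)"
  proof -
    have "(\<Sum>k\<in>UNIV. t k) - 2 * t j = complex_of_real (inner a x) - 2 * t j"
      by (simp only: sumt)
    also have "\<dots> = complex_of_real (inner a x - 2 * (a $ j * x $ j))"
      by (simp add: t_def a_def x_def)
    also have "\<dots> = complex_of_real (inner a (flip j x))" by (simp add: inner_flip)
    finally have "(\<Sum>k\<in>UNIV. t k) - 2 * t j = complex_of_real (inner a (flip j x))" .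
    thus ?thesis using ia[OF extR_flip[OF x, of j]] by simp
  qed
  from flip_lemma[OF st s1 s2 tj]
  have fj: "cmod (u $ j) * cmod (z $ j) = 1" and fk: "\<And>k. k \<noteq> j \<Longrightarrow> cmod (u $ k) * cmod (z $ k) = 0"
    by (auto simp: t_def norm_mult)
  define v where "v = cnj (u $ j) * z $ j"
  have v1: "cmod v = 1" using fj by (simp add: v_def norm_mult)
  define c where "c = cnj v"
  have "(\<Sum>k\<in>UNIV. cnj (u $ k) * z $ k) = v"
    unfolding v_def by (rule sum_single) (use fk in auto)
  hence "inner u (c *s z) = Re (cnj v * v)" by (simp add: inner_smult_C c_def)
  also have "cnj v * v = 1" by (rule cnj_mult_unit[OF v1])
  finally have "inner u (c *s z) = 1" by simp
  moreover have "NC (c *s z) \<le> 1" using nz v1 by (simp add: NC_smult c_def)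
  moreover have "cmod c = 1" using v1 by (simp add: c_def)
  ultimately show "\<exists>c. cmod c = 1 \<and> c *s z \<in> G" using Gu by blast
qed

lemma PC_PR: assumes P: PC shows PR
  unfolding PR_def
proof (intro allI impI)
  fix F x assume F: "max_convex_subset {x. N x = 1} F" and x: "extR x"
  have cF: "convex F" "F \<subseteq> {x. N x = 1}" using F by (auto simp: max_convex_subset_def)
  have "convex (cplx_of ` F)" by (rule convex_linear_image[OF linear_cplx_of cF(1)])
  moreover have "cplx_of ` F \<subseteq> {w. NC w = 1}" using cF(2) by (auto simp: NC_cplx)
  ultimately obtain G where G: "max_convex_subset {w. NC w = 1} G" "cplx_of ` F \<subseteq> G"
    using zorn_max by blast
  obtain u where Du: "\<forall>v. inner u v \<le> NC v" and Gu: "G = {v. NC v \<le> 1 \<and> inner u v = 1}"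
    using maxface[OF NC_snorm NC_axis G(1)] by blast
  have innc: "inner u (cplx_of y) = (\<Sum>k\<in>UNIV. Re (u $ k) * y $ k)" for y
    unfolding inner_C by simp
  have imz: "Im (u $ k) = 0" if y: "y \<in> F" and yk: "y $ k \<noteq> 0" for y k
  proof -
    have "inner u (cplx_of y) = 1" using y G(2) Gu by auto
    hence s2: "(\<Sum>k\<in>UNIV. Re (u $ k) * y $ k) = 1" by (simp add: innc)
    have le: "Re (u $ k) * y $ k \<le> cmod (u $ k) * \<bar>y $ k\<bar>" for k
    proof -
      have "Re (u $ k) * y $ k \<le> \<bar>Re (u $ k)\<bar> * \<bar>y $ k\<bar>" by (metis abs_ge_self abs_mult)
      moreover have "\<bar>Re (u $ k)\<bar> * \<bar>y $ k\<bar> \<le> cmod (u $ k) * \<bar>y $ k\<bar>"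
        by (rule mult_right_mono[OF abs_Re_le_cmod abs_ge_zero])
      ultimately show ?thesis by linarith
    qed
    have "(\<Sum>k\<in>UNIV. cmod (u $ k) * \<bar>y $ k\<bar>) \<le> N y" by (rule dualC_bound[OF Du])
    hence prem: "(\<Sum>k\<in>UNIV. cmod (u $ k) * \<bar>y $ k\<bar>) \<le> (\<Sum>k\<in>UNIV. Re (u $ k) * y $ k)"
      using s2 cF(2) y by auto
    have eq: "Re (u $ k) * y $ k = cmod (u $ k) * \<bar>y $ k\<bar>"
      by (rule sum_eq_termwise[where f="\<lambda>k. Re (u $ k) * y $ k" and g="\<lambda>k. cmod (u $ k) * \<bar>y $ k\<bar>", OF le prem])
    have "cmod (u $ k) * \<bar>y $ k\<bar> \<le> \<bar>Re (u $ k)\<bar> * \<bar>y $ k\<bar>"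
    proof -
      have "Re (u $ k) * y $ k \<le> \<bar>Re (u $ k)\<bar> * \<bar>y $ k\<bar>" by (metis abs_ge_self abs_mult)
      thus ?thesis using eq by linarith
    qed
    hence "cmod (u $ k) \<le> \<bar>Re (u $ k)\<bar>" using yk by simp
    hence "(cmod (u $ k))\<^sup>2 \<le> (Re (u $ k))\<^sup>2"
      using abs_le_square_iff[of "cmod (u $ k)" "Re (u $ k)"] by simp
    thus ?thesis by (simp add: cmod_power2)
  qed
  define h where "h = (\<chi> k. if Re (u $ k) < 0 then - cmod (u $ k) else cmod (u $ k))"
  have habs: "\<bar>h $ k\<bar> = cmod (u $ k)" for k by (simp add: h_def)
  have Dh: "inner h w \<le> N w" for w
  proof -
    have "inner h w \<le> (\<Sum>k\<in>UNIV. cmod (u $ k) * \<bar>w $ k\<bar>)"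
      unfolding inner_R
    proof (intro sum_mono)
      fix k show "h $ k * w $ k \<le> cmod (u $ k) * \<bar>w $ k\<bar>"
        using habs[of k] by (metis abs_ge_self abs_mult)
    qed
    also have "\<dots> \<le> N w" by (rule dualC_bound[OF Du])
    finally show ?thesis .
  qed
  have hF: "inner h y = 1" if y: "y \<in> F" for y
  proof -
    have "inner h y = (\<Sum>k\<in>UNIV. Re (u $ k) * y $ k)"
      unfolding inner_R
    proof (intro sum.cong refl)
      fix k show "h $ k * y $ k = Re (u $ k) * y $ k"
      proof (cases "y $ k = 0")
        case False
        hence "Im (u $ k) = 0" by (rule imz[OF y])
        hence "cmod (u $ k) = \<bar>Re (u $ k)\<bar>" by (simp add: cmod_def)
        thus ?thesis by (simp add: h_def)
      qed simp
    qed
    also have "\<dots> = 1" using y G(2) Gu innc by auto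
    finally show ?thesis .
  qed
  let ?Fh = "{v. N v \<le> 1 \<and> inner h v = 1}"
  have "convex ?Fh" by (rule snorm_convex_face[OF N_snorm])
  moreover have "?Fh \<subseteq> {v. N v = 1}"
  proof
    fix v assume "v \<in> ?Fh" thus "v \<in> {v. N v = 1}" using Dh[of v] by simp
  qed
  moreover have "F \<subseteq> ?Fh" using hF cF(2) by auto
  ultimately have FFh: "?Fh = F" using F unfolding max_convex_subset_def by blast
  define T where "T y = (\<Sum>k\<in>UNIV. cnj (u $ k) * complex_of_real (y $ k))" for y
  have T1: "1 \<le> cmod (T y)" if y: "extR y" for y
  proof -
    obtain c where c: "cmod c = 1" "c *s cplx_of y \<in> G"
      using P G(1) part1[of y] y unfolding PC_def by blast
    hence "inner u (c *s cplx_of y) = 1" using Gu by auto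
    hence "Re (c * T y) = 1" by (simp add: inner_smult_C T_def)
    moreover have "Re (c * T y) \<le> cmod (c * T y)" by (rule complex_Re_le_cmod)
    ultimately show ?thesis using c(1) by (simp add: norm_mult)
  qed
  define t where "t k = cnj (u $ k) * complex_of_real (x $ k)" for k
  have st: "(\<Sum>k\<in>UNIV. cmod (t k)) \<le> 1"
  proof -
    have "(\<Sum>k\<in>UNIV. cmod (t k)) = (\<Sum>k\<in>UNIV. cmod (u $ k) * \<bar>x $ k\<bar>)"
      by (simp add: t_def norm_mult)
    also have "\<dots> \<le> N x" by (rule dualC_bound[OF Du])
    also have "\<dots> \<le> 1" using x by (simp add: ext_pt_def)
    finally show ?thesis .
  qed
  have sumt: "(\<Sum>k\<in>UNIV. t k) = T x" by (simp add: t_def T_def)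
  have s1: "1 \<le> cmod (\<Sum>k\<in>UNIV. t k)" using T1[OF x] sumt by simp
  obtain j where tj: "t j \<noteq> 0"
  proof (rule ccontr)
    assume "\<not> thesis"
    hence "\<forall>j. t j = 0" using that by blast
    thus False using s1 by simp
  qed
  have s2: "1 \<le> cmod ((\<Sum>k\<in>UNIV. t k) - 2 * t j)"
  proof -
    have "T (flip j x) = (\<Sum>k\<in>UNIV. t k - (if k = j then 2 * t j else 0))"
      unfolding T_def by (intro sum.cong refl) (auto simp: t_def)
    also have "\<dots> = (\<Sum>k\<in>UNIV. t k) - 2 * t j" by (simp add: sum_subtractf)
    finally show ?thesis using T1[OF extR_flip[OF x, of j]] by simp
  qed
  from flip_lemma[OF st s1 s2 tj]
  have fj: "cmod (u $ j) * \<bar>x $ j\<bar> = 1" and fk: "\<And>k. k \<noteq> j \<Longrightarrow> cmod (u $ k) * \<bar>x $ k\<bar> = 0"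
    by (auto simp: t_def norm_mult)
  have "inner h x = h $ j * x $ j"
    unfolding inner_R
  proof (rule sum_single)
    fix k assume "k \<noteq> j"
    hence "\<bar>h $ k * x $ k\<bar> = 0" using fk habs by (simp add: abs_mult)
    thus "h $ k * x $ k = 0" by simp
  qed
  moreover have "\<bar>h $ j * x $ j\<bar> = 1" using fj habs by (simp add: abs_mult)
  ultimately have "inner h x = 1 \<or> inner h (- x) = 1" by (auto simp: abs_if split: if_splits)
  moreover have "N x \<le> 1" "N (- x) \<le> 1" using x snorm_minus[OF N_snorm, of x] by (auto simp: ext_pt_def)
  ultimately show "x \<in> F \<or> - x \<in> F" using FFh by blast
qed

end

theorem proposition4p3:
  fixes N :: "real ^ 'n \<Rightarrow> real"
  assumes "absolute_norm N"
  shows "(\<forall>x. ext_pt {y. N y \<le> 1} x \<longleftrightarrow> ext_pt {z. cplx_norm N z \<le> 1} (cplx_of x))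
         \<and> (real_CL N \<longleftrightarrow> complex_CL (cplx_norm N))"
proof -
  interpret absn N using assms by (simp add: absn_def)
  show ?thesis using part1 realCL_iff complexCL_iff PR_PC PC_PR by blast
qed

end
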